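(* Let $\varphi$ be a Schwarz-type function, let $F\in\mathcal{P}$, and let $\omega$ be the Schwarz-type function with $F=\ell\circ\omega$. Then the following are equivalent: (a) $T_{F,\varphi}(f)\in\mathcal{P}$ for every $f\in\mathcal{P}$; (b) $T_{F,\varphi}(\ell_\lambda)\in\mathcal{P}$ for every $\lambda$ with $|\lambda|=1$; (c) for all $z\in\mathbb{D}$, $$4|\varphi(z)|\,|\mathrm{Im}\,\omega(z)|<(1-|\omega(z)|^2)(1-|\varphi(z)|^2),$$ equivalently, for all $z\in\mathbb{D}$, $$2|\varphi(z)|\left|\frac{\mathrm{Im}\,F(z)}{\mathrm{Re}\,F(z)}\right|<1-|\varphi(z)|^2;$$ (d) for all $z\in\mathbb{D}$, $$|\arg F(z)|<\frac{\pi}{2}-\arcsin\frac{2|\varphi(z)|}{1+|\varphi(z)|^2}.$$ Moreover, $\frac{\pi}{2}-\arcsin\frac{2|\varphi(z)|}{1+|\varphi(z)|^2}=\frac{\pi}{2}-\arctan\frac{2|\varphi(z)|}{1-|\varphi(z)|^2}=\arctan\frac{1-|\varphi(z)|^2}{2|\varphi(z)|}$, where for $\varphi(z)=0$ the last expression is understood as $\arctan(+\infty)=\pi/2$.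
   Context: $\mathbb{D}$ is the open unit disk. $\mathcal{P}$ is the set of analytic $f$ on $\mathbb{D}$ with $\mathrm{Re}\,f>0$ and $f(0)=1$. A Schwarz-type function is an analytic $\varphi:\mathbb{D}\to\mathbb{D}$ with $\varphi(0)=0$. $\ell(z)=\frac{1+z}{1-z}$ and, for $|\lambda|=1$, $\ell_\lambda(z)=\frac{1+\lambda z}{1-\lambda z}$. $T_{F,\varphi}(f)=F\cdot(f\circ\varphi)$. $\arg$ denotes the principal branch of the argument with values in $(-\pi,\pi]$. *)

theory Defs
  imports "HOL-Analysis.Analysis"
begin

definition carath_class :: "(complex \<Rightarrow> complex) set" where
  "carath_class = {f. f holomorphic_on ball 0 1 \<and> (\<forall>z\<in>ball 0 1. Re (f z) > 0) \<and> f 0 = 1}"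

definition schwarz_type :: "(complex \<Rightarrow> complex) \<Rightarrow> bool" where
  "schwarz_type \<phi> \<longleftrightarrow> \<phi> holomorphic_on ball 0 1 \<and> \<phi> ` ball 0 1 \<subseteq> ball 0 1 \<and> \<phi> 0 = 0"

definition ell :: "complex \<Rightarrow> complex" where
  "ell z = (1 + z) / (1 - z)"

definition ell_lam :: "complex \<Rightarrow> complex \<Rightarrow> complex" where
  "ell_lam lam z = (1 + lam * z) / (1 - lam * z)"

definition T_op :: "(complex \<Rightarrow> complex) \<Rightarrow> (complex \<Rightarrow> complex) \<Rightarrow> (complex \<Rightarrow> complex) \<Rightarrow> (complex \<Rightarrow> complex)" where
  "T_op F \<phi> f = (\<lambda>z. F z * f (\<phi> z))"

end

theory Submission
  imports Defs "HOL-Complex_Analysis.Complex_Analysis"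
begin

lemma den_nz: "w \<noteq> 1 \<Longrightarrow> (1 - Re w)^2 + (Im w)^2 \<noteq> 0"
  by (metis add_cancel_right_left complex_eqI one_complex.simps(1,2) power_eq_0_iff
      right_minus_eq sum_power2_eq_zero_iff)

lemma ell_Re: "w \<noteq> 1 \<Longrightarrow> Re (ell w) = (1 - (cmod w)^2)/(cmod (1-w))^2"
  using den_nz[of w] unfolding ell_def Re_divide cmod_power2
  by (simp add: field_simps power2_eq_square)

lemma ell_Im: "w \<noteq> 1 \<Longrightarrow> Im (ell w) = 2*Im w/(cmod (1-w))^2"
  using den_nz[of w] unfolding ell_def Im_divide cmod_power2
  by (simp add: field_simps power2_eq_square)

lemma key:
  assumes "cmod w < 1" "cmod u < 1"
  shows "Re (ell w * ell u) > 0 \<longleftrightarrow> 4*Im w*Im u < (1-(cmod w)^2)*(1-(cmod u)^2)"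
proof -
  have w1: "w \<noteq> 1" "u \<noteq> 1" using assms by auto
  have A: "(cmod (1-w))^2 > 0" "(cmod (1-u))^2 > 0" using w1 by auto
  have "Re (ell w * ell u) = ((1-(cmod w)^2)*(1-(cmod u)^2) - 4*Im w*Im u) / ((cmod (1-w))^2 * (cmod (1-u))^2)"
    using w1 A by (simp add: ell_Re ell_Im field_simps)
  moreover have P: "0 < (cmod (1-w))^2 * (cmod (1-u))^2" using A by simp
  ultimately show ?thesis by (simp add: zero_less_divide_iff)
qed

lemma ell_lam_carath:
  assumes "cmod lam = 1" shows "ell_lam lam \<in> carath_class"
proof -
  have nz: "1 - lam * z \<noteq> 0" if "z \<in> ball 0 1" for z
  proof
    assume "1 - lam * z = 0"
    then have "lam * z = 1" by simp
    then have "cmod (lam*z) = 1" by simp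
    moreover have "cmod (lam*z) < 1" using that assms by (simp add: norm_mult)
    ultimately show False by simp
  qed
  have "ell_lam lam holomorphic_on ball 0 1"
    unfolding ell_lam_def by (intro holomorphic_intros) (use nz in auto)
  moreover have "Re (ell_lam lam z) > 0" if "z \<in> ball 0 1" for z
  proof -
    have "cmod (lam*z) < 1" using that assms by (simp add: norm_mult)
    moreover have "ell_lam lam z = ell (lam*z)" by (simp add: ell_lam_def ell_def)
    moreover have "lam * z \<noteq> 1" using \<open>cmod (lam*z) < 1\<close> by auto
    moreover have "(cmod (lam*z))^2 < 1" using \<open>cmod (lam*z) < 1\<close>
      by (simp add: power_less_one_iff)
    ultimately show ?thesis using ell_Re[of "lam*z"] by (auto intro!: divide_pos_pos)
  qed
  ultimately show ?thesis by (simp add: carath_class_def ell_lam_def)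
qed

lemma carath_schwarz:
  assumes f: "f \<in> carath_class" and z: "cmod z < 1"
  shows "\<exists>u. cmod u \<le> cmod z \<and> f z = ell u"
proof -
  define g where "g = (\<lambda>z. (f z - 1) / (f z + 1))"
  have Re: "Re (f x) > 0" if "cmod x < 1" for x using f that by (simp add: carath_class_def)
  have nz: "f x + 1 \<noteq> 0" if "cmod x < 1" for x
  proof
    assume "f x + 1 = 0" then have "Re (f x + 1) = 0" by simp
    with Re[OF that] show False by simp
  qed
  have hol: "g holomorphic_on ball 0 1" unfolding g_def
    using f nz by (intro holomorphic_intros) (auto simp: carath_class_def)
  have g0: "g 0 = 0" using f by (simp add: g_def carath_class_def)
  have lt: "cmod (g x) < 1" if "cmod x < 1" for x
  proof -
    have "(cmod (f x - 1))^2 < (cmod (f x + 1))^2"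
      using Re[OF that] unfolding cmod_power2 by (simp add: power2_eq_square algebra_simps)
    then have "cmod (f x - 1) < cmod (f x + 1)" by (simp add: power2_less_imp_less)
    then show ?thesis using nz[OF that] by (simp add: g_def norm_divide)
  qed
  have "cmod (g z) \<le> cmod z" by (rule Schwarz_Lemma(1)[OF hol g0 lt z])
  moreover have "f z = ell (g z)"
  proof -
    have a: "1 + g z = 2 * f z / (f z + 1)" "1 - g z = 2 / (f z + 1)"
      using nz[OF z] by (simp_all add: g_def field_simps)
    show ?thesis using nz[OF z] unfolding ell_def a by simp
  qed
  ultimately show ?thesis by blast
qed

lemma trig_part:
  fixes r :: real assumes r: "0 \<le> r" "r < 1"
  shows "pi/2 - arcsin (2*r/(1+r^2)) = pi/2 - arctan (2*r/(1-r^2))"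
    and "pi/2 - arctan (2*r/(1-r^2)) = (if r = 0 then pi/2 else arctan ((1-r^2)/(2*r)))"
proof -
  define x where "x = 2*r/(1+r^2)"
  have r2: "r^2 < 1" using r by (simp add: power_less_one_iff)
  have p: "1 + r^2 > 0" by (simp add: add_pos_nonneg)
  have x0: "0 \<le> x" using r p by (simp add: x_def)
  have "(1-r)^2 > 0" using r by simp
  moreover have "(1-r)^2 = 1 - 2*r + r^2" by (simp add: power2_eq_square algebra_simps)
  ultimately have "2*r < 1 + r^2" by linarith
  then have x1: "x < 1" using p by (simp add: x_def)
  have e: "(1-r^2)^2 = (1+r^2)^2 - (2*r)^2" by (simp add: power2_eq_square algebra_simps)
  have "1 - x^2 = ((1+r^2)^2 - (2*r)^2) / (1+r^2)^2"
    using p unfolding x_def power_divide by (simp add: diff_divide_distrib)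
  also have "\<dots> = ((1-r^2)/(1+r^2))^2" unfolding e[symmetric] power_divide ..
  finally have "1 - x^2 = ((1-r^2)/(1+r^2))^2" .
  moreover have "0 \<le> (1-r^2)/(1+r^2)" using r2 p by simp
  ultimately have sq: "sqrt (1 - x^2) = (1-r^2)/(1+r^2)" using r2 by simp
  have "x / sqrt (1 - x^2) = x / ((1-r^2)/(1+r^2))" by (simp only: sq)
  also have "\<dots> = 2*r/(1-r^2)" using p by (simp add: x_def)
  finally have "x / sqrt (1 - x^2) = 2*r/(1-r^2)" .
  then have "arcsin x = arctan (2*r/(1-r^2))"
    using arcsin_arctan[of x] x0 x1 by simp
  then show "pi/2 - arcsin (2*r/(1+r^2)) = pi/2 - arctan (2*r/(1-r^2))" by (simp add: x_def)
  show "pi/2 - arctan (2*r/(1-r^2)) = (if r = 0 then pi/2 else arctan ((1-r^2)/(2*r)))"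
  proof (cases "r = 0")
    case False
    then have "0 < 2*r/(1-r^2)" using r r2 by simp
    from arctan_inverse[OF this] show ?thesis using False by (simp add: inverse_eq_divide)
  qed simp
qed

lemma cc':
  assumes "cmod w < 1" "F = ell w" "0 \<le> r"
  shows "(4 * r * \<bar>Im w\<bar> < (1 - (cmod w)^2) * (1 - r^2)) \<longleftrightarrow> (2 * r * \<bar>Im F / Re F\<bar> < 1 - r^2)"
proof -
  have w1: "w \<noteq> 1" using assms by auto
  have A: "(cmod (1-w))^2 > 0" using w1 by auto
  have B: "1 - (cmod w)^2 > 0" using assms by (simp add: power_less_one_iff)
  have "Im F / Re F = 2 * Im w / (1 - (cmod w)^2)"
    using A B w1 by (simp add: assms(2) ell_Re ell_Im field_simps)
  then have "2 * r * \<bar>Im F / Re F\<bar> = 4 * r * \<bar>Im w\<bar> / (1 - (cmod w)^2)"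
    using B assms(3) by (simp add: abs_mult abs_divide)
  then show ?thesis using B by (simp add: pos_divide_less_eq mult.commute)
qed

lemma c'd:
  fixes F :: complex and r :: real
  assumes "Re F > 0" "0 \<le> r" "r < 1"
  shows "(2 * r * \<bar>Im F / Re F\<bar> < 1 - r^2) \<longleftrightarrow> \<bar>Arg F\<bar> < pi/2 - arctan (2*r/(1-r^2))"
proof -
  have "\<bar>Arg F\<bar> = arctan \<bar>Im F / Re F\<bar>"
    using arg_conv_arctan[OF assms(1)] by (simp add: abs_if arctan_minus)
  moreover have r2: "r^2 < 1" using assms by (simp add: power_less_one_iff)
  ultimately show ?thesis
  proof (cases "r = 0")
    case True
    then show ?thesis using \<open>\<bar>Arg F\<bar> = _\<close> arctan_ubound[of "\<bar>Im F / Re F\<bar>"] by simp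
  next
    case False
    then have rp: "0 < 2*r" using assms by simp
    have "\<bar>Arg F\<bar> < pi/2 - arctan (2*r/(1-r^2)) \<longleftrightarrow> \<bar>Im F / Re F\<bar> < (1-r^2)/(2*r)"
      using \<open>\<bar>Arg F\<bar> = _\<close> trig_part(2)[OF assms(2,3)] False by (simp add: arctan_less_iff)
    also have "\<dots> \<longleftrightarrow> \<bar>Im F / Re F\<bar> * (2*r) < 1-r^2" by (rule pos_less_divide_eq[OF rp])
    finally show ?thesis by (simp add: mult.commute)
  qed
qed

theorem theorem2p2:
  fixes \<phi> F \<omega> :: "complex \<Rightarrow> complex"
  assumes "schwarz_type \<phi>"
    and "F \<in> carath_class"
    and "schwarz_type \<omega>"
    and "\<forall>z\<in>ball 0 1. F z = ell (\<omega> z)"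
  shows "((\<forall>f\<in>carath_class. T_op F \<phi> f \<in> carath_class) \<longleftrightarrow>
           (\<forall>lam. cmod lam = 1 \<longrightarrow> T_op F \<phi> (ell_lam lam) \<in> carath_class))
       \<and> ((\<forall>lam. cmod lam = 1 \<longrightarrow> T_op F \<phi> (ell_lam lam) \<in> carath_class) \<longleftrightarrow>
           (\<forall>z\<in>ball 0 1. 4 * cmod (\<phi> z) * \<bar>Im (\<omega> z)\<bar>
                < (1 - (cmod (\<omega> z))\<^sup>2) * (1 - (cmod (\<phi> z))\<^sup>2)))
       \<and> ((\<forall>z\<in>ball 0 1. 4 * cmod (\<phi> z) * \<bar>Im (\<omega> z)\<bar>
                < (1 - (cmod (\<omega> z))\<^sup>2) * (1 - (cmod (\<phi> z))\<^sup>2)) \<longleftrightarrow>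
           (\<forall>z\<in>ball 0 1. 2 * cmod (\<phi> z) * \<bar>Im (F z) / Re (F z)\<bar> < 1 - (cmod (\<phi> z))\<^sup>2))
       \<and> ((\<forall>z\<in>ball 0 1. 4 * cmod (\<phi> z) * \<bar>Im (\<omega> z)\<bar>
                < (1 - (cmod (\<omega> z))\<^sup>2) * (1 - (cmod (\<phi> z))\<^sup>2)) \<longleftrightarrow>
           (\<forall>z\<in>ball 0 1. \<bar>Arg (F z)\<bar>
                < pi / 2 - arcsin (2 * cmod (\<phi> z) / (1 + (cmod (\<phi> z))\<^sup>2))))
       \<and> (\<forall>z\<in>ball 0 1.
            pi / 2 - arcsin (2 * cmod (\<phi> z) / (1 + (cmod (\<phi> z))\<^sup>2))
              = pi / 2 - arctan (2 * cmod (\<phi> z) / (1 - (cmod (\<phi> z))\<^sup>2))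
          \<and> pi / 2 - arctan (2 * cmod (\<phi> z) / (1 - (cmod (\<phi> z))\<^sup>2))
              = (if \<phi> z = 0 then pi / 2
                 else arctan ((1 - (cmod (\<phi> z))\<^sup>2) / (2 * cmod (\<phi> z)))))"
proof -
  note phi = assms(1)[unfolded schwarz_type_def]
  note om = assms(3)[unfolded schwarz_type_def]
  note Fc = assms(2)[unfolded carath_class_def, simplified]
  have phi1: "cmod (\<phi> z) < 1" if "z \<in> ball 0 1" for z using phi that by (auto simp: image_subset_iff)
  have om1: "cmod (\<omega> z) < 1" if "z \<in> ball 0 1" for z using om that by (auto simp: image_subset_iff)
  have Fe: "F z = ell (\<omega> z)" if "z \<in> ball 0 1" for z using assms(4) that by auto
  have ReF: "Re (F z) > 0" if "z \<in> ball 0 1" for z using Fc that by auto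
  define A where "A = (\<forall>f\<in>carath_class. T_op F \<phi> f \<in> carath_class)"
  define B where "B = (\<forall>lam. cmod lam = 1 \<longrightarrow> T_op F \<phi> (ell_lam lam) \<in> carath_class)"
  define C where "C = (\<forall>z\<in>ball 0 1. 4 * cmod (\<phi> z) * \<bar>Im (\<omega> z)\<bar>
                < (1 - (cmod (\<omega> z))\<^sup>2) * (1 - (cmod (\<phi> z))\<^sup>2))"
  have AB: "A \<Longrightarrow> B" unfolding A_def B_def using ell_lam_carath by blast
  have BC: "B \<Longrightarrow> C" unfolding C_def
  proof
    fix z :: complex assume B and z: "z \<in> ball 0 1"
    show "4 * cmod (\<phi> z) * \<bar>Im (\<omega> z)\<bar> < (1 - (cmod (\<omega> z))\<^sup>2) * (1 - (cmod (\<phi> z))\<^sup>2)"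
    proof (cases "\<phi> z = 0")
      case True
      have "(cmod (\<omega> z))^2 < 1" using om1[OF z] by (simp add: power_less_one_iff)
      then show ?thesis using True by simp
    next
      case False
      define s where "s = (if Im (\<omega> z) \<ge> 0 then \<i> else - \<i>)"
      define u where "u = s * complex_of_real (cmod (\<phi> z))"
      define lam where "lam = u / \<phi> z"
      have cs: "cmod s = 1" by (simp add: s_def)
      have cu: "cmod u = cmod (\<phi> z)" by (simp add: u_def norm_mult cs)
      have cl: "cmod lam = 1" using False cu by (simp add: lam_def norm_divide)
      have lu: "lam * \<phi> z = u" using False by (simp add: lam_def)
      have imu: "Im (\<omega> z) * Im u = \<bar>Im (\<omega> z)\<bar> * cmod (\<phi> z)"
        by (simp add: u_def s_def)
      have "T_op F \<phi> (ell_lam lam) \<in> carath_class" using \<open>B\<close> cl unfolding B_def by blast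
      then have "Re (F z * ell_lam lam (\<phi> z)) > 0" using z by (simp add: carath_class_def T_op_def)
      then have "Re (ell (\<omega> z) * ell u) > 0"
        using lu Fe[OF z] by (simp add: ell_lam_def ell_def)
      then have "4 * Im (\<omega> z) * Im u < (1 - (cmod (\<omega> z))^2) * (1 - (cmod u)^2)"
        using key[OF om1[OF z], of u] cu phi1[OF z] by simp
      then show ?thesis using imu cu by (simp add: mult.commute mult.left_commute)
    qed
  qed
  have CA: "C \<Longrightarrow> A" unfolding A_def
  proof
    fix f assume C and f: "f \<in> carath_class"
    note fc = f[unfolded carath_class_def, simplified]
    have "(\<lambda>z. f (\<phi> z)) holomorphic_on ball 0 1"
      using holomorphic_on_compose_gen[of \<phi> "ball 0 1" f "ball 0 1"] phi fc
      by (auto simp: o_def)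
    then have hol: "T_op F \<phi> f holomorphic_on ball 0 1"
      unfolding T_op_def using Fc by (intro holomorphic_intros) auto
    have v0: "T_op F \<phi> f 0 = 1" using Fc fc phi by (simp add: T_op_def)
    have "Re (T_op F \<phi> f z) > 0" if z: "z \<in> ball 0 1" for z
    proof -
      define r where "r = cmod (\<phi> z)"
      define w where "w = \<omega> z"
      obtain u where u: "cmod u \<le> r" "f (\<phi> z) = ell u"
        using carath_schwarz[OF f phi1[OF z]] unfolding r_def by blast
      have r1: "r < 1" "0 \<le> r" using phi1[OF z] by (auto simp: r_def)
      have w1: "cmod w < 1" using om1[OF z] by (simp add: w_def)
      have u1: "cmod u < 1" using u r1 by simp
      have c: "4 * r * \<bar>Im w\<bar> < (1 - (cmod w)^2) * (1 - r^2)"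
        using \<open>C\<close> z unfolding C_def r_def w_def by blast
      have "Im w * Im u \<le> \<bar>Im w\<bar> * \<bar>Im u\<bar>" by (simp add: abs_mult[symmetric])
      also have "\<dots> \<le> \<bar>Im w\<bar> * r"
        using abs_Im_le_cmod[of u] u(1) by (intro mult_left_mono) auto
      finally have 1: "4 * Im w * Im u \<le> 4 * r * \<bar>Im w\<bar>" by (simp add: mult.commute)
      have W: "0 \<le> 1 - (cmod w)^2" using w1 by (simp add: power_le_one)
      have "(cmod u)^2 \<le> r^2" using u(1) by (simp add: power_mono)
      then have "(1 - (cmod w)^2) * (1 - r^2) \<le> (1 - (cmod w)^2) * (1 - (cmod u)^2)"
        using W by (intro mult_left_mono) auto
      with 1 c have "4 * Im w * Im u < (1 - (cmod w)^2) * (1 - (cmod u)^2)" by linarith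
      then have "Re (ell w * ell u) > 0" using key[OF w1 u1] by simp
      then show ?thesis using Fe[OF z] u(2) by (simp add: T_op_def w_def)
    qed
    then show "T_op F \<phi> f \<in> carath_class" using hol v0 by (simp add: carath_class_def)
  qed
  have CC': "C \<longleftrightarrow> (\<forall>z\<in>ball 0 1. 2 * cmod (\<phi> z) * \<bar>Im (F z) / Re (F z)\<bar> < 1 - (cmod (\<phi> z))\<^sup>2)"
    unfolding C_def using cc'[OF om1 Fe] by auto
  have T: "\<forall>z\<in>ball 0 1.
            pi / 2 - arcsin (2 * cmod (\<phi> z) / (1 + (cmod (\<phi> z))\<^sup>2))
              = pi / 2 - arctan (2 * cmod (\<phi> z) / (1 - (cmod (\<phi> z))\<^sup>2))
          \<and> pi / 2 - arctan (2 * cmod (\<phi> z) / (1 - (cmod (\<phi> z))\<^sup>2))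
              = (if \<phi> z = 0 then pi / 2
                 else arctan ((1 - (cmod (\<phi> z))\<^sup>2) / (2 * cmod (\<phi> z))))"
    using trig_part[OF norm_ge_zero phi1] by simp
  have CD: "C \<longleftrightarrow> (\<forall>z\<in>ball 0 1. \<bar>Arg (F z)\<bar>
                < pi / 2 - arcsin (2 * cmod (\<phi> z) / (1 + (cmod (\<phi> z))\<^sup>2)))"
    unfolding CC' using c'd[OF ReF norm_ge_zero phi1] trig_part(1)[OF norm_ge_zero phi1] by auto
  show ?thesis
    using AB BC CA CC' CD T unfolding A_def[symmetric] B_def[symmetric] C_def[symmetric] by blast
qed

end
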